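(* Let $T\ge1$ and $\eta>0$, and run SMD with $\eta_t=\eta/\sqrt t$. For $j<T$ let $\alpha_j=\frac1{(T-j)(T-j+1)}$, and for $t\ge\lceil T/2\rceil$ let $$w_t=\sum_{j=\lceil T/2\rceil}^{\min(t,T-1)}\alpha_j(x_t-x_j),\quad z_t=\sum_{j=\lceil T/2\rceil}^{\min(t,T-1)}\alpha_jB_\psi(x_j,x_t),\quad \rho_t=\sum_{j=\lceil T/2\rceil}^{\min(t,T-1)}\alpha_j.$$ Then $$f(x_T)-f^*\le\frac2T\sum_{t=\lceil T/2\rceil}^T(f(x_t)-f^* )+\sum_{t=\lceil T/2\rceil}^T\langle\xi_t,w_t\rangle+\frac{\eta}{\sqrt{2T}}\sum_{t=\lceil T/2\rceil}^T\rho_t\|\hat g_t\|_*^2+\frac{\sqrt2}{\eta\sqrt T}\sum_{t=\lceil T/2\rceil}^Tz_t.$$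
   Context: Let $\|\cdot\|$ be a norm on $\mathbb R^d$ with dual norm $\|y\|_*=\sup_{\|w\|\le1}\langle y,w\rangle$. Let $\mathcal X\subseteq\mathbb R^d$ be nonempty, closed and convex, and $f:\mathcal X\to\mathbb R$ convex with a minimizer $x^*\in\mathcal X$, $f^*=f(x^* )$. The regularizer $\psi:\mathbb R^d\to(-\infty,+\infty]$ satisfies Assumption 1: closed, convex, differentiable on $\mathrm{int}(\mathrm{dom}\,\psi)\neq\emptyset$, $1$-strongly convex w.r.t. $\|\cdot\|$, $\mathcal X\subseteq\mathrm{dom}\,\psi$, and either $\|\nabla\psi(y_k)\|_2\to\infty$ for every sequence in $\mathrm{int}\,\mathrm{dom}\,\psi$ converging to a boundary point of $\mathrm{dom}\,\psi$, or $\mathcal X\subseteq\mathrm{int}\,\mathrm{dom}\,\psi$. $B_\psi(x,y)=\psi(x)-\psi(y)-\langle x-y,\nabla\psi(y)\rangle$. SMD: pick $x_1\in\mathrm{int}\,\mathrm{dom}\,\psi$; at step $t$ receive $\hat g_t=g_t-\xi_t$ with $g_t\in\partial f(x_t)$ and arbitrary $\xi_t\in\mathbb R^d$, and set $x_{t+1}=\arg\min_{x\in\mathcal X}\langle\hat g_t,x\rangle+\eta_t^{-1}B_\psi(x,x_t)$. Empty sums are zero. *)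

theory Defs
  imports "HOL-Analysis.Analysis"
begin

definition is_norm :: "('a::euclidean_space \<Rightarrow> real) \<Rightarrow> bool" where
  "is_norm nrm \<longleftrightarrow>
     (\<forall>x. nrm x = 0 \<longleftrightarrow> x = 0) \<and>
     (\<forall>c x. nrm (c *\<^sub>R x) = \<bar>c\<bar> * nrm x) \<and>
     (\<forall>x y. nrm (x + y) \<le> nrm x + nrm y)"

definition dual_norm :: "('a::euclidean_space \<Rightarrow> real) \<Rightarrow> 'a \<Rightarrow> real" where
  "dual_norm nrm y = Sup {inner y w | w. nrm w \<le> 1}"

definition subgrad :: "'a::euclidean_space set \<Rightarrow> ('a \<Rightarrow> real) \<Rightarrow> 'a \<Rightarrow> 'a set" where
  "subgrad X f x = {g. \<forall>y\<in>X. f y \<ge> f x + inner g (y - x)}"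

text \<open>The regularizer psi : R^d \<rightarrow> (-inf,+inf] is represented by its effective domain D
  (psi = +inf outside D) and its real values on D; gpsi is its gradient on interior D.
  Assumption 1 of the paper.\<close>
definition regularizer_assm ::
  "('a::euclidean_space \<Rightarrow> real) \<Rightarrow> 'a set \<Rightarrow> 'a set \<Rightarrow> ('a \<Rightarrow> real) \<Rightarrow> ('a \<Rightarrow> 'a) \<Rightarrow> bool" where
  "regularizer_assm nrm X D psi gpsi \<longleftrightarrow>
     \<comment> \<open>closed (lower semicontinuous): epigraph is closed\<close>
     closed {(x, s). x \<in> D \<and> psi x \<le> s} \<and>
     \<comment> \<open>convex\<close>
     convex D \<and> convex_on D psi \<and>
     \<comment> \<open>differentiable on the nonempty interior of the domain, with gradient gpsi\<close>
     interior D \<noteq> {} \<and>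
     (\<forall>y\<in>interior D. (psi has_derivative (\<lambda>h. inner (gpsi y) h)) (at y)) \<and>
     \<comment> \<open>1-strongly convex w.r.t. nrm\<close>
     (\<forall>x\<in>D. \<forall>y\<in>D. \<forall>u\<in>{0..1}.
        psi (u *\<^sub>R x + (1 - u) *\<^sub>R y)
          \<le> u * psi x + (1 - u) * psi y - u * (1 - u) / 2 * (nrm (x - y))\<^sup>2) \<and>
     X \<subseteq> D \<and>
     ((\<forall>ys p. (\<forall>k. ys k \<in> interior D) \<longrightarrow> ys \<longlonglongrightarrow> p \<longrightarrow> p \<in> frontier D \<longrightarrow>
          filterlim (\<lambda>k. norm (gpsi (ys k))) at_top sequentially)
      \<or> X \<subseteq> interior D)"

definition bregman :: "('a::euclidean_space \<Rightarrow> real) \<Rightarrow> ('a \<Rightarrow> 'a) \<Rightarrow> 'a \<Rightarrow> 'a \<Rightarrow> real" where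
  "bregman psi gpsi x y = psi x - psi y - inner (x - y) (gpsi y)"

end

theory Submission
  imports Defs
begin


lemma nrm_basic:
  assumes "is_norm nrm"
  shows "nrm 0 = 0" "nrm x \<ge> 0" "nrm (- x) = nrm x" "nrm (x - y) = nrm (y - x)"
proof -
  have sc: "\<And>c x. nrm (c *\<^sub>R x) = \<bar>c\<bar> * nrm x" and tr: "\<And>x y. nrm (x + y) \<le> nrm x + nrm y"
    using assms unfolding is_norm_def by auto
  show z: "nrm 0 = 0" using sc[of 0 0] by simp
  have "nrm (- x) = nrm x" using sc[of "-1" x] by simp
  then show "nrm (- x) = nrm x" .
  have "nrm 0 \<le> nrm x + nrm (-x)" using tr[of x "-x"] by simp
  then show "nrm x \<ge> 0" using z \<open>nrm (- x) = nrm x\<close> by simp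
  show "nrm (x - y) = nrm (y - x)" using sc[of "-1" "x - y"] by simp
qed

lemma nrm_sum:
  assumes "is_norm nrm" "finite S"
  shows "nrm (sum f S) \<le> (\<Sum>i\<in>S. nrm (f i))"
  using assms(2)
proof induction
  case empty then show ?case using nrm_basic[OF assms(1)] by simp
next
  case (insert a S)
  have "nrm (f a + sum f S) \<le> nrm (f a) + nrm (sum f S)"
    using assms(1) unfolding is_norm_def by blast
  then show ?case using insert by simp
qed

lemma nrm_upper:
  fixes nrm :: "'a::euclidean_space \<Rightarrow> real"
  assumes "is_norm nrm"
  shows "\<exists>M. \<forall>x. nrm x \<le> M * norm x"
proof -
  have sc: "\<And>c x. nrm (c *\<^sub>R x) = \<bar>c\<bar> * nrm x"
    using assms unfolding is_norm_def by auto
  define M where "M = (\<Sum>i\<in>Basis. nrm (i::'a))"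
  have "nrm x \<le> M * norm x" for x
  proof -
    have "nrm x = nrm (\<Sum>i\<in>Basis. (inner x i) *\<^sub>R i)" by (simp add: euclidean_representation)
    also have "\<dots> \<le> (\<Sum>i\<in>Basis. nrm ((inner x i) *\<^sub>R i))" by (rule nrm_sum[OF assms]) simp
    also have "\<dots> = (\<Sum>i\<in>Basis. \<bar>inner x i\<bar> * nrm i)" using sc by simp
    also have "\<dots> \<le> (\<Sum>i\<in>Basis. norm x * nrm i)"
      apply (rule sum_mono)
      apply (rule mult_right_mono)
      using Basis_le_norm nrm_basic(2)[OF assms] by auto
    also have "\<dots> = M * norm x" by (simp add: M_def sum_distrib_left mult.commute)
    finally show ?thesis .
  qed
  then show ?thesis by blast
qed

lemma nrm_continuous:
  fixes nrm :: "'a::euclidean_space \<Rightarrow> real"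
  assumes "is_norm nrm"
  shows "continuous_on S nrm"
proof -
  obtain M where M: "\<And>x. nrm x \<le> M * norm x" using nrm_upper[OF assms] by blast
  have tr: "\<And>x y. nrm (x + y) \<le> nrm x + nrm y" using assms unfolding is_norm_def by auto
  have lip: "\<bar>nrm x - nrm y\<bar> \<le> M * norm (x - y)" for x y
  proof -
    have "nrm x \<le> nrm y + nrm (x - y)" using tr[of y "x - y"] by simp
    moreover have "nrm y \<le> nrm x + nrm (y - x)" using tr[of x "y - x"] by simp
    moreover have "nrm (y - x) = nrm (x - y)" using nrm_basic(4)[OF assms] by simp
    ultimately show ?thesis using M[of "x - y"] by linarith
  qed
  have Mpos: "M \<ge> 0"
  proof -
    obtain b :: 'a where b: "b \<in> Basis" using nonempty_Basis by blast
    then have "b \<noteq> 0" by auto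
    then have "nrm b > 0" using assms nrm_basic(2)[OF assms, of b] unfolding is_norm_def by force
    then show ?thesis using M[of b] b
      by (smt (verit, ccfv_SIG) norm_ge_zero zero_less_mult_iff)
  qed
  show ?thesis
    unfolding continuous_on_iff
  proof (intro ballI allI impI)
    fix x e assume "x \<in> S" "(e::real) > 0"
    show "\<exists>d>0. \<forall>x'\<in>S. dist x' x < d \<longrightarrow> dist (nrm x') (nrm x) < e"
    proof (intro exI[of _ "e / (M + 1)"] conjI ballI impI)
      show "e / (M + 1) > 0" using \<open>e>0\<close> Mpos by simp
      fix y assume "y \<in> S" "dist y x < e / (M + 1)"
      then have "(M+1) * norm (y - x) < e" using Mpos by (simp add: dist_norm field_simps)
      moreover have "\<bar>nrm y - nrm x\<bar> \<le> M * norm (y - x)" by (rule lip)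
      moreover have "M * norm (y - x) \<le> (M+1) * norm (y - x)" by (simp add: mult_right_mono)
      ultimately show "dist (nrm y) (nrm x) < e" by (simp add: dist_real_def)
    qed
  qed
qed

lemma nrm_lower:
  fixes nrm :: "'a::euclidean_space \<Rightarrow> real"
  assumes "is_norm nrm"
  shows "\<exists>c>0. \<forall>x. c * norm x \<le> nrm x"
proof -
  have sc: "\<And>c x. nrm (c *\<^sub>R x) = \<bar>c\<bar> * nrm x" and z: "\<And>x. nrm x = 0 \<longleftrightarrow> x = 0"
    using assms unfolding is_norm_def by auto
  obtain x0 where x0: "x0 \<in> sphere (0::'a) 1" "\<And>y. y \<in> sphere 0 1 \<Longrightarrow> nrm x0 \<le> nrm y"
    using continuous_attains_inf[of "sphere (0::'a) 1" nrm] nrm_continuous[OF assms]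
    by fastforce
  have "x0 \<noteq> 0" using x0 by auto
  then have c: "nrm x0 > 0" using z nrm_basic(2)[OF assms, of x0] by force
  have "nrm x0 * norm x \<le> nrm x" for x
  proof (cases "x = 0")
    case True then show ?thesis using nrm_basic[OF assms] by simp
  next
    case False
    have "(1 / norm x) *\<^sub>R x \<in> sphere 0 1" using False by simp
    then have "nrm x0 \<le> nrm ((1 / norm x) *\<^sub>R x)" by (rule x0(2))
    also have "\<dots> = nrm x / norm x" using sc by simp
    finally show ?thesis using False by (simp add: field_simps)
  qed
  then show ?thesis using c by blast
qed

lemma dual_ineq:
  fixes nrm :: "'a::euclidean_space \<Rightarrow> real"
  assumes "is_norm nrm"
  shows "inner v w \<le> dual_norm nrm v * nrm w"
proof -
  obtain c where c: "c > 0" "\<And>x. c * norm x \<le> nrm x" using nrm_lower[OF assms] by blast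
  have sc: "\<And>c x. nrm (c *\<^sub>R x) = \<bar>c\<bar> * nrm x" and z: "\<And>x. nrm x = 0 \<longleftrightarrow> x = 0"
    using assms unfolding is_norm_def by auto
  have bdd: "bdd_above {inner v w | w. nrm w \<le> 1}"
  proof (rule bdd_aboveI[of _ "norm v / c"])
    fix y assume "y \<in> {inner v w | w. nrm w \<le> 1}"
    then obtain u where u: "y = inner v u" "nrm u \<le> 1" by blast
    have "c * norm u \<le> 1" using c(2)[of u] u by simp
    then have nu: "norm u \<le> 1 / c" using c by (simp add: field_simps)
    have "y \<le> norm v * norm u" using u Cauchy_Schwarz_ineq2 by (metis abs_le_D1 norm_cauchy_schwarz)
    also have "\<dots> \<le> norm v * (1 / c)" using mult_left_mono[OF nu, of "norm v"] by simp
    finally show "y \<le> norm v / c" by simp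
  qed
  show ?thesis
  proof (cases "w = 0")
    case True then show ?thesis using nrm_basic[OF assms] by simp
  next
    case False
    then have p: "nrm w > 0" using z nrm_basic(2)[OF assms, of w] by force
    have "nrm ((1 / nrm w) *\<^sub>R w) \<le> 1" using sc p by simp
    then have "inner v ((1 / nrm w) *\<^sub>R w) \<le> dual_norm nrm v"
      unfolding dual_norm_def by (intro cSup_upper[OF _ bdd]) blast
    then show ?thesis using p by (simp add: field_simps)
  qed
qed



lemma dirderiv:
  assumes "(psi has_derivative (\<lambda>h. inner G h)) (at y)"
  shows "((\<lambda>s. (psi (y + s *\<^sub>R v) - psi y) / s) \<longlongrightarrow> inner G v) (at_right 0)"
proof -
  have d1: "((\<lambda>s. y + s *\<^sub>R v) has_derivative (\<lambda>s. s *\<^sub>R v)) (at (0::real))"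
    by (auto intro!: derivative_eq_intros)
  have d2: "(psi has_derivative (\<lambda>h. inner G h)) (at (y + 0 *\<^sub>R v))" using assms by simp
  have "((\<lambda>s. psi (y + s *\<^sub>R v)) has_derivative (\<lambda>s. s * inner G v)) (at (0::real))"
    using diff_chain_at[OF d1 d2] by (simp add: o_def)
  then have "((\<lambda>s. psi (y + s *\<^sub>R v)) has_field_derivative inner G v) (at (0::real))"
    unfolding has_field_derivative_def
    by (metis (no_types, lifting) ext mult.commute)
  then have "((\<lambda>s. (psi (y + s *\<^sub>R v) - psi y) / s) \<longlongrightarrow> inner G v) (at 0)"
    unfolding has_field_derivative_iff by simp
  then show ?thesis by (rule tendsto_mono[OF at_le, rotated]) simp
qed

lemma ev01: "eventually (\<lambda>x. x \<in> {0<..<1}) (at_right (0::real))"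
  by (rule eventually_at_right_real) simp

lemma reg_facts:
  assumes "regularizer_assm nrm X D psi gpsi"
  shows "convex D" "X \<subseteq> D" "interior D \<subseteq> D"
    "\<And>y. y \<in> interior D \<Longrightarrow> (psi has_derivative (\<lambda>h. inner (gpsi y) h)) (at y)"
    "\<And>x y u. x \<in> D \<Longrightarrow> y \<in> D \<Longrightarrow> 0 \<le> u \<Longrightarrow> u \<le> 1 \<Longrightarrow>
        psi (u *\<^sub>R x + (1 - u) *\<^sub>R y) \<le> u * psi x + (1 - u) * psi y - u * (1 - u) / 2 * (nrm (x - y))\<^sup>2"
  using assms interior_subset unfolding regularizer_assm_def by auto

lemma strong_grad:
  assumes psi: "regularizer_assm nrm X D psi gpsi" and y: "y \<in> interior D" and w: "w \<in> D"
  shows "psi y + inner (gpsi y) (w - y) + (nrm (w - y))\<^sup>2 / 2 \<le> psi w"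
proof -
  define N where "N = (nrm (w - y))\<^sup>2"
  have yD: "y \<in> D" using y reg_facts(3)[OF psi] by auto
  have lim1: "((\<lambda>s. (psi (y + s *\<^sub>R (w - y)) - psi y) / s) \<longlongrightarrow> inner (gpsi y) (w - y)) (at_right 0)"
    by (rule dirderiv[OF reg_facts(4)[OF psi y]])
  have lim2: "((\<lambda>s. psi w - psi y - (1 - s) / 2 * N) \<longlongrightarrow> psi w - psi y - (1 - 0) / 2 * N) (at_right (0::real))"
    by (intro tendsto_intros) auto
  have ev: "eventually (\<lambda>s. (psi (y + s *\<^sub>R (w - y)) - psi y) / s \<le> psi w - psi y - (1 - s) / 2 * N) (at_right 0)"
    using ev01
  proof (rule eventually_mono)
    fix s :: real assume s: "s \<in> {0<..<1}"
    have eq: "s *\<^sub>R w + (1 - s) *\<^sub>R y = y + s *\<^sub>R (w - y)" by (simp add: algebra_simps)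
    have "psi (y + s *\<^sub>R (w - y)) \<le> s * psi w + (1 - s) * psi y - s * (1 - s) / 2 * N"
      using reg_facts(5)[OF psi w yD, of s] s unfolding eq N_def by auto
    then have "psi (y + s *\<^sub>R (w - y)) - psi y \<le> s * (psi w - psi y - (1 - s) / 2 * N)"
      by (simp add: algebra_simps)
    then show "(psi (y + s *\<^sub>R (w - y)) - psi y) / s \<le> psi w - psi y - (1 - s) / 2 * N"
      using s by (simp add: divide_simps mult.commute)
  qed
  have "inner (gpsi y) (w - y) \<le> psi w - psi y - (1 - 0) / 2 * N"
    by (rule tendsto_le[OF _ lim2 lim1 ev]) simp
  then show ?thesis unfolding N_def by simp
qed

lemma bregman_nonneg:
  assumes psi: "regularizer_assm nrm X D psi gpsi" and y: "y \<in> interior D" and w: "w \<in> D"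
    and nrm: "is_norm nrm"
  shows "bregman psi gpsi w y \<ge> (nrm (w - y))\<^sup>2 / 2" "bregman psi gpsi w y \<ge> 0"
proof -
  show "bregman psi gpsi w y \<ge> (nrm (w - y))\<^sup>2 / 2"
    using strong_grad[OF psi y w] unfolding bregman_def by (simp add: inner_commute)
  moreover have "0 \<le> (nrm (w - y))\<^sup>2 / 2" by simp
  ultimately show "bregman psi gpsi w y \<ge> 0" by linarith
qed

lemma min_ineq:
  assumes X: "convex X" and x': "x' \<in> X" and u: "u \<in> X" and e: "e > 0"
    and mn: "\<forall>y\<in>X. inner gh x' + bregman psi gpsi x' xt / e \<le> inner gh y + bregman psi gpsi y xt / e"
    and s: "0 < s" "s \<le> 1"
  shows "psi (x' + s *\<^sub>R (u - x')) - psi x' \<ge> - s * (e * inner gh (u - x') - inner (u - x') (gpsi xt))"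
proof -
  define y where "y = x' + s *\<^sub>R (u - x')"
  have "y = (1 - s) *\<^sub>R x' + s *\<^sub>R u" unfolding y_def by (simp add: algebra_simps)
  then have yX: "y \<in> X" using convexD[OF X x' u, of "1 - s" s] s by simp
  have "inner gh x' + bregman psi gpsi x' xt / e \<le> inner gh y + bregman psi gpsi y xt / e"
    using mn yX by blast
  then have "e * (inner gh x' + bregman psi gpsi x' xt / e) \<le> e * (inner gh y + bregman psi gpsi y xt / e)"
    using e by (intro mult_left_mono) auto
  then have "e * inner gh x' + bregman psi gpsi x' xt \<le> e * inner gh y + bregman psi gpsi y xt"
    using e by (simp add: distrib_left)
  then have "e * inner gh x' + psi x' - inner (x' - xt) (gpsi xt)
      \<le> e * inner gh y + psi y - inner (y - xt) (gpsi xt)"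
    unfolding bregman_def by simp
  moreover have "inner gh y = inner gh x' + s * inner gh (u - x')"
    unfolding y_def by (simp add: inner_add_right)
  moreover have "inner (y - xt) (gpsi xt) = inner (x' - xt) (gpsi xt) + s * inner (u - x') (gpsi xt)"
    unfolding y_def by (simp add: inner_diff_left inner_add_left)
  ultimately have "psi y - psi x' \<ge> - s * (e * inner gh (u - x') - inner (u - x') (gpsi xt))"
    by (simp add: algebra_simps)
  then show ?thesis unfolding y_def .
qed

lemma optimality:
  assumes psi: "regularizer_assm nrm X D psi gpsi"
    and X: "convex X" and x': "x' \<in> X" "x' \<in> interior D" and u: "u \<in> X" and e: "e > 0"
    and mn: "\<forall>y\<in>X. inner gh x' + bregman psi gpsi x' xt / e \<le> inner gh y + bregman psi gpsi y xt / e"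
  shows "e * inner gh (u - x') - inner (u - x') (gpsi xt) + inner (gpsi x') (u - x') \<ge> 0"
proof -
  define L where "L = e * inner gh (u - x') - inner (u - x') (gpsi xt)"
  have lim1: "((\<lambda>s. (psi (x' + s *\<^sub>R (u - x')) - psi x') / s) \<longlongrightarrow> inner (gpsi x') (u - x')) (at_right 0)"
    by (rule dirderiv[OF reg_facts(4)[OF psi x'(2)]])
  have ev: "eventually (\<lambda>s. - L \<le> (psi (x' + s *\<^sub>R (u - x')) - psi x') / s) (at_right 0)"
    using ev01
  proof (rule eventually_mono)
    fix s :: real assume s: "s \<in> {0<..<1}"
    have "psi (x' + s *\<^sub>R (u - x')) - psi x' \<ge> - s * L"
      unfolding L_def by (rule min_ineq[OF X x'(1) u e mn]) (use s in auto)
    then show "- L \<le> (psi (x' + s *\<^sub>R (u - x')) - psi x') / s"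
      using s by (simp add: divide_simps mult.commute)
  qed
  have "- L \<le> inner (gpsi x') (u - x')"
    by (rule tendsto_le[OF _ lim1 tendsto_const ev]) simp
  then show ?thesis unfolding L_def by simp
qed



lemma min_interior:
  assumes psi: "regularizer_assm nrm X D psi gpsi"
    and X: "convex X" and a: "a \<in> X" "a \<in> interior D" and x': "x' \<in> X" and e: "e > 0"
    and mn: "\<forall>y\<in>X. inner gh x' + bregman psi gpsi x' xt / e \<le> inner gh y + bregman psi gpsi y xt / e"
  shows "x' \<in> interior D"
proof (rule ccontr)
  assume nx: "x' \<notin> interior D"
  have XD: "X \<subseteq> D" and cD: "convex D" using reg_facts[OF psi] by auto
  have leg: "\<forall>ys p. (\<forall>k. ys k \<in> interior D) \<longrightarrow> ys \<longlonglongrightarrow> p \<longrightarrow> p \<in> frontier D \<longrightarrow>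
          filterlim (\<lambda>k. norm (gpsi (ys k))) at_top sequentially"
    using psi nx x' unfolding regularizer_assm_def by blast
  have x'D: "x' \<in> D" using XD x' by auto
  have x'cl: "x' \<in> closure D" using x'D closure_subset by blast
  have front: "x' \<in> frontier D" using x'cl nx unfolding frontier_def by blast
  obtain r where r: "r > 0" "cball a r \<subseteq> interior D"
    using a(2) open_contains_cball open_interior by blast
  have cont: "continuous_on (cball a r) psi"
  proof (rule continuous_at_imp_continuous_on, rule ballI)
    fix w assume "w \<in> cball a r"
    then have "w \<in> interior D" using r by auto
    then show "isCont psi w"
      using reg_facts(4)[OF psi] has_derivative_continuous by blast
  qed
  obtain wm where wm: "wm \<in> cball a r" "\<And>w. w \<in> cball a r \<Longrightarrow> psi w \<le> psi wm"
    using continuous_attains_sup[OF compact_cball _ cont] r(1) by fastforce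
  define M where "M = psi wm"
  define L where "L = e * inner gh (a - x') - inner (a - x') (gpsi xt)"
  define K where "K = (M - psi x' + 2 * \<bar>L\<bar>) / r"
  have bound: "norm (gpsi (x' - s *\<^sub>R (x' - a))) \<le> \<bar>K\<bar>" if s: "0 < s" "s \<le> 1" for s
  proof -
    define y where "y = x' - s *\<^sub>R (x' - a)"
    define G where "G = gpsi y"
    have yi: "y \<in> interior D" unfolding y_def
      by (rule mem_interior_closure_convex_shrink[OF cD a(2) x'cl s])
    have yeq: "y = x' + s *\<^sub>R (a - x')" unfolding y_def by (simp add: algebra_simps)
    have m1: "psi y - psi x' \<ge> - s * L"
      unfolding yeq L_def by (rule min_ineq[OF X x' a(1) e mn s])
    have sg: "psi y + inner G (x' - y) + (nrm (x' - y))\<^sup>2 / 2 \<le> psi x'"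
      unfolding G_def by (rule strong_grad[OF psi yi x'D])
    have "inner G (x' - y) = - s * inner G (a - x')" unfolding yeq
      by (simp add: inner_diff_right inner_add_right)
    moreover have "0 \<le> (nrm (x' - y))\<^sup>2 / 2" by simp
    ultimately have "psi y - s * inner G (a - x') \<le> psi x'" using sg by linarith
    then have "s * inner G (a - x') \<ge> - s * L" using m1 by linarith
    then have "s * (- L) \<le> s * inner G (a - x')" by simp
    then have gL: "inner G (a - x') \<ge> - L" using s(1) by (simp only: mult_le_cancel_left_pos)
    have psiy: "psi y \<ge> psi x' - \<bar>L\<bar>"
    proof -
      have "s * L \<le> s * \<bar>L\<bar>" by (rule mult_left_mono) (use s in auto)
      moreover have "s * \<bar>L\<bar> \<le> 1 * \<bar>L\<bar>" by (rule mult_right_mono) (use s in auto)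
      ultimately have "s * L \<le> \<bar>L\<bar>" by simp
      then show ?thesis using m1 by linarith
    qed
    show ?thesis
    proof (cases "G = 0")
      case True then show ?thesis unfolding y_def G_def by simp
    next
      case False
      define w where "w = a + (r / norm G) *\<^sub>R G"
      have "dist a w = r" unfolding w_def using False r by (simp add: dist_norm)
      then have wc: "w \<in> cball a r" by simp
      then have wD: "w \<in> D" using r reg_facts(3)[OF psi] by auto
      have sg2: "psi y + inner G (w - y) + (nrm (w - y))\<^sup>2 / 2 \<le> psi w"
        unfolding G_def by (rule strong_grad[OF psi yi wD])
      have "w - y = (1 - s) *\<^sub>R (a - x') + (r / norm G) *\<^sub>R G"
        unfolding w_def yeq by (simp add: algebra_simps)
      then have "inner G (w - y) = (1 - s) * inner G (a - x') + r * norm G"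
        using False by (simp add: inner_add_right power2_norm_eq_inner[symmetric] power2_eq_square)
      moreover have "(1 - s) * inner G (a - x') \<ge> - \<bar>L\<bar>"
      proof -
        have "(1 - s) * inner G (a - x') \<ge> (1 - s) * (- L)"
          using gL s by (intro mult_left_mono) auto
        moreover have "(1 - s) * (- L) \<ge> - \<bar>L\<bar>"
        proof -
          have "(1 - s) * L \<le> (1 - s) * \<bar>L\<bar>" by (rule mult_left_mono) (use s in auto)
          moreover have "(1 - s) * \<bar>L\<bar> \<le> 1 * \<bar>L\<bar>" by (rule mult_right_mono) (use s in auto)
          moreover have "(1 - s) * (- L) = - ((1 - s) * L)" by simp
          ultimately show ?thesis by linarith
        qed
        ultimately show ?thesis by linarith
      qed
      moreover have "psi w \<le> M" unfolding M_def using wm(2)[OF wc] .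
      moreover have "0 \<le> (nrm (w - y))\<^sup>2 / 2" by simp
      ultimately have "r * norm G \<le> M - psi x' + 2 * \<bar>L\<bar>" using sg2 psiy by linarith
      then have "norm G \<le> K" unfolding K_def using r(1) by (simp add: field_simps)
      then show ?thesis unfolding y_def G_def by simp
    qed
  qed
  define ys where "ys k = x' - inverse (real (Suc k)) *\<^sub>R (x' - a)" for k
  have inv1: "inverse (real (Suc k)) \<le> 1" for k by (simp add: inverse_le_1_iff)
  have ysi: "ys k \<in> interior D" for k
    unfolding ys_def by (rule mem_interior_closure_convex_shrink[OF cD a(2) x'cl]) (use inv1 in auto)
  have "ys \<longlonglongrightarrow> x' - 0 *\<^sub>R (x' - a)"
    unfolding ys_def by (intro tendsto_intros LIMSEQ_inverse_real_of_nat)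
  then have lim: "ys \<longlonglongrightarrow> x'" by simp
  have "filterlim (\<lambda>k. norm (gpsi (ys k))) at_top sequentially"
    using leg ysi lim front by blast
  then have "eventually (\<lambda>k. \<bar>K\<bar> + 1 \<le> norm (gpsi (ys k))) sequentially"
    by (simp add: filterlim_at_top)
  then obtain k where "\<bar>K\<bar> + 1 \<le> norm (gpsi (ys k))" by (meson eventually_sequentially order.refl)
  moreover have "norm (gpsi (ys k)) \<le> \<bar>K\<bar>" unfolding ys_def by (rule bound) (use inv1 in auto)
  ultimately show False by linarith
qed

lemma one_step:
  assumes psi: "regularizer_assm nrm X D psi gpsi" and nrm: "is_norm nrm"
    and X: "convex X" and xt: "xt \<in> interior D"
    and x': "x' \<in> X" "x' \<in> interior D" and u: "u \<in> X" and e: "e > 0"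
    and mn: "\<forall>y\<in>X. inner gh x' + bregman psi gpsi x' xt / e \<le> inner gh y + bregman psi gpsi y xt / e"
  shows "e * inner gh (xt - u) \<le> bregman psi gpsi u xt - bregman psi gpsi u x'
           + e\<^sup>2 / 2 * (dual_norm nrm gh)\<^sup>2"
proof -
  have opt: "e * inner gh (u - x') - inner (u - x') (gpsi xt) + inner (gpsi x') (u - x') \<ge> 0"
    by (rule optimality[OF psi X x' u e mn])
  have three: "bregman psi gpsi u xt - bregman psi gpsi u x' - bregman psi gpsi x' xt
      = inner (gpsi x') (u - x') - inner (u - x') (gpsi xt)"
    unfolding bregman_def by (simp add: inner_diff_left inner_commute algebra_simps)
  have x'D: "x' \<in> D" using x' reg_facts[OF psi] by auto
  define N where "N = nrm (x' - xt)"
  have bx: "bregman psi gpsi x' xt \<ge> N\<^sup>2 / 2"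
    unfolding N_def by (rule bregman_nonneg(1)[OF psi xt x'D nrm])
  have "inner gh (xt - x') \<le> dual_norm nrm gh * nrm (xt - x')" by (rule dual_ineq[OF nrm])
  also have "nrm (xt - x') = N" unfolding N_def by (rule nrm_basic(4)[OF nrm])
  finally have d: "e * inner gh (xt - x') \<le> e * (dual_norm nrm gh * N)"
    using e by (simp add: mult_left_mono)
  have q: "e * (dual_norm nrm gh * N) - N\<^sup>2 / 2 \<le> e\<^sup>2 / 2 * (dual_norm nrm gh)\<^sup>2"
  proof -
    have "0 \<le> (e * dual_norm nrm gh - N)\<^sup>2 / 2" by simp
    then show ?thesis by (simp add: power2_eq_square algebra_simps)
  qed
  have split: "e * inner gh (xt - u) = e * inner gh (xt - x') - e * inner gh (u - x')"
    by (simp add: inner_diff_right algebra_simps)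
  show ?thesis using opt three bx d q split by linarith
qed



lemma key_alg: fixes x qc A :: real assumes "x \<ge> 0"
  shows "(1/(x+2))*(qc+A) + (1/((x+1)*(x+2)))*(qc + A - (x+2)*qc) = (1/(x+1))*A"
proof -
  have p: "x + 1 \<noteq> 0" "x + 2 \<noteq> 0" using assms by auto
  have "(1/(x+2))*(qc+A) + (1/((x+1)*(x+2)))*(qc + A - (x+2)*qc) = ((x+1)*(qc+A) + (qc + A - (x+2)*qc)) / ((x+1)*(x+2))"
    using p by (simp add: add_divide_distrib diff_divide_distrib)
  also have "(x+1)*(qc+A) + (qc + A - (x+2)*qc) = A * (x+2)" by (simp add: algebra_simps)
  also have "A * (x+2) / ((x+1)*(x+2)) = (1/(x+1))*A" using p by simp
  finally show ?thesis .
qed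

lemma last_iter_identity:
  fixes q :: "nat \<Rightarrow> real"
  assumes "m < T"
  shows "q T = (1 / real (m + 1)) * (\<Sum>t = T - m..T. q t)
     + (\<Sum>j = T - m..T - 1. (1 / (real (T - j) * real (T - j + 1))) * (\<Sum>t = j..T. q t - q j))"
  using assms
proof (induction m)
  case 0
  then show ?case by simp
next
  case (Suc m)
  define c where "c = T - Suc m"
  have cm: "T - m = Suc c" using Suc.prems unfolding c_def by simp
  have cT: "c \<le> T - 1" "c < T" using Suc.prems unfolding c_def by auto
  define A where "A = (\<Sum>t = Suc c..T. q t)"
  define R where "R = (\<Sum>j = Suc c..T - 1. (1 / (real (T - j) * real (T - j + 1))) * (\<Sum>t = j..T. q t - q j))"
  have IH: "q T = (1 / real (m + 1)) * A + R"
    using Suc unfolding A_def R_def cm by simp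
  have s1: "(\<Sum>t = c..T. q t) = q c + A"
    unfolding A_def using cT by (simp add: sum.atLeast_Suc_atMost)
  have s2: "(\<Sum>j = c..T - 1. (1 / (real (T - j) * real (T - j + 1))) * (\<Sum>t = j..T. q t - q j))
      = (1 / (real (T - c) * real (T - c + 1))) * (\<Sum>t = c..T. q t - q c) + R"
    unfolding R_def using cT by (simp add: sum.atLeast_Suc_atMost)
  have Tc: "T - c = m + 1" using Suc.prems unfolding c_def by simp
  have s3: "(\<Sum>t = c..T. q t - q c) = q c + A - real (m + 2) * q c"
  proof -
    have "real (T - c) = real T - real c" using cT by (simp add: of_nat_diff)
    then have "real T - real c = 1 + real m" using Tc by simp
    then show ?thesis using s1 cT Tc by (simp add: sum_subtractf)
  qed
  have "q T = (1 / real (Suc m + 1)) * (q c + A)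
     + ((1 / (real (m + 1) * real (m + 2))) * (q c + A - real (m + 2) * q c) + R)"
  proof -
    have r: "real (Suc m + 1) = real m + 2" "real (m + 1) = real m + 1" "real (m + 2) = real m + 2" by auto
    show ?thesis unfolding r using IH key_alg[of "real m" "q c" A] by simp
  qed
  then show ?case unfolding c_def[symmetric] s1 s2 s3 Tc by simp
qed

lemma tele_bound:
  fixes b e :: "nat \<Rightarrow> real"
  assumes "j \<le> n" "b j = 0" "\<And>t. t \<ge> j \<Longrightarrow> b t \<ge> 0" "\<And>t. t \<ge> j \<Longrightarrow> e t \<ge> 0"
    "\<And>t. j < t \<Longrightarrow> t \<le> n \<Longrightarrow> e t - e (t - 1) \<le> \<kappa>"
  shows "(\<Sum>t = j..n. e t * (b t - b (Suc t))) \<le> \<kappa> * (\<Sum>t = j..n. b t)"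
proof -
  have "(\<Sum>t = j..n. e t * (b t - b (Suc t))) \<le> \<kappa> * (\<Sum>t = j..n. b t) - e n * b (Suc n)"
    using assms(1,5)
  proof (induction n rule: dec_induct)
    case base
    then show ?case using assms(2) by (simp add: algebra_simps)
  next
    case (step n)
    have IH: "(\<Sum>t = j..n. e t * (b t - b (Suc t))) \<le> \<kappa> * (\<Sum>t = j..n. b t) - e n * b (Suc n)"
      using step by simp
    have k: "e (Suc n) - e n \<le> \<kappa>" using step.prems[of "Suc n"] step.hyps by simp
    have "(e (Suc n) - e n) * b (Suc n) \<le> \<kappa> * b (Suc n)"
      by (rule mult_right_mono[OF k]) (use assms(3) step.hyps in auto)
    then show ?case using IH step.hyps by (simp add: algebra_simps)
  qed
  moreover have "e n * b (Suc n) \<ge> 0" using assms(1,3,4) by simp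
  ultimately show ?thesis by linarith
qed

lemma swap_tri:
  fixes F :: "nat \<Rightarrow> nat \<Rightarrow> 'b::comm_monoid_add"
  shows "(\<Sum>j = c..T - 1. \<Sum>t = j..T. F j t) = (\<Sum>t = c..T. \<Sum>j = c..min t (T - 1). F j t)"
proof -
  have "(\<Sum>j = c..T - 1. \<Sum>t = j..T. F j t) = (\<Sum>j = c..T - 1. \<Sum>t\<in>{c..T}. if j \<le> t then F j t else 0)"
  proof (rule sum.cong[OF refl])
    fix j assume "j \<in> {c..T - 1}"
    then have "{t \<in> {c..T}. j \<le> t} = {j..T}" by auto
    then show "(\<Sum>t = j..T. F j t) = (\<Sum>t\<in>{c..T}. if j \<le> t then F j t else 0)"
      using sum.inter_filter[of "{c..T}" "F j" "\<lambda>t. j \<le> t"] by simp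
  qed
  also have "\<dots> = (\<Sum>t\<in>{c..T}. \<Sum>j = c..T - 1. if j \<le> t then F j t else 0)"
    by (rule sum.swap)
  also have "\<dots> = (\<Sum>t = c..T. \<Sum>j = c..min t (T - 1). F j t)"
  proof (rule sum.cong[OF refl])
    fix t assume "t \<in> {c..T}"
    have "{j \<in> {c..T - 1}. j \<le> t} = {c..min t (T - 1)}" by auto
    then show "(\<Sum>j = c..T - 1. if j \<le> t then F j t else 0) = (\<Sum>j = c..min t (T - 1). F j t)"
      using sum.inter_filter[of "{c..T - 1}" "\<lambda>j. F j t" "\<lambda>j. j \<le> t"] by simp
  qed
  finally show ?thesis .
qed

lemma sqrt_step:
  assumes "1 \<le> t" "real T \<le> 2 * real t" "1 \<le> T"
  shows "sqrt (real t) - sqrt (real (t - 1)) \<le> sqrt 2 / sqrt (real T)"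
proof -
  have t1: "real (t - 1) = real t - 1" using assms(1) by simp
  have pos: "sqrt (real t) > 0" using assms(1) by simp
  have "(sqrt (real t) - sqrt (real t - 1)) * (sqrt (real t) + sqrt (real t - 1)) = 1"
    using assms(1) by (simp add: algebra_simps)
  moreover have "sqrt (real t) + sqrt (real t - 1) \<ge> sqrt (real t)" using assms(1) by simp
  moreover have "sqrt (real t) - sqrt (real t - 1) \<ge> 0" by simp
  ultimately have "(sqrt (real t) - sqrt (real t - 1)) * sqrt (real t) \<le> 1"
    by (metis mult_left_mono)
  then have a: "sqrt (real t) - sqrt (real t - 1) \<le> 1 / sqrt (real t)"
    using pos by (simp add: field_simps)
  have "sqrt (real T) \<le> sqrt 2 * sqrt (real t)"
    using assms(2) by (simp add: real_sqrt_mult[symmetric])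
  then have "1 / sqrt (real t) \<le> sqrt 2 / sqrt (real T)"
    using pos assms by (auto simp: field_simps)
  then show ?thesis using a t1 by simp
qed



lemma ceil_facts:
  fixes T :: nat assumes "T \<ge> 1"
  shows "1 \<le> nat \<lceil>real T / 2\<rceil>" "nat \<lceil>real T / 2\<rceil> \<le> T"
    "real T \<le> 2 * real (nat \<lceil>real T / 2\<rceil>)" "2 * real (nat \<lceil>real T / 2\<rceil>) \<le> real T + 1"
proof -
  define k where "k = \<lceil>real T / 2\<rceil>"
  have a: "real T / 2 \<le> real_of_int k" unfolding k_def by simp
  have b: "real_of_int k < real T / 2 + 1" unfolding k_def by linarith
  have "real_of_int (2 * k) < real_of_int (int T + 2)" using b by simp
  then have b2: "2 * k \<le> int T + 1" by linarith
  have "real T \<ge> 1" using assms by simp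
  then have "real_of_int k > 0" using a by linarith
  then have "k > 0" by simp
  then have k0: "k \<ge> 1" by linarith
  have rk: "real (nat k) = real_of_int k" using k0 by simp
  show "1 \<le> nat \<lceil>real T / 2\<rceil>" using k0 unfolding k_def[symmetric] by linarith
  show "nat \<lceil>real T / 2\<rceil> \<le> T" using b2 k0 unfolding k_def[symmetric] by linarith
  show "real T \<le> 2 * real (nat \<lceil>real T / 2\<rceil>)" using a rk unfolding k_def[symmetric] by linarith
  have "real_of_int (2 * k) \<le> real_of_int (int T + 1)" using b2 by (simp only: of_int_le_iff)
  then show "2 * real (nat \<lceil>real T / 2\<rceil>) \<le> real T + 1" using rk unfolding k_def[symmetric] by simp
qed

theorem lemma1:
  fixes nrm :: "'a::euclidean_space \<Rightarrow> real"
    and X D :: "'a set" and f psi :: "'a \<Rightarrow> real" and gpsi :: "'a \<Rightarrow> 'a"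
    and xstar :: 'a and x g \<xi> :: "nat \<Rightarrow> 'a" and \<eta> :: real and T :: nat
  assumes nrm: "is_norm nrm"
    and X: "X \<noteq> {}" "closed X" "convex X"
    and f_convex: "convex_on X f"
    and xstar: "xstar \<in> X" "\<forall>y\<in>X. f xstar \<le> f y"
    and psi: "regularizer_assm nrm X D psi gpsi"
    and x1: "x 1 \<in> X \<inter> interior D"
    and subg: "\<forall>t\<ge>1. g t \<in> subgrad X f (x t)"
    and step: "\<forall>t\<ge>1. x (Suc t) \<in> X \<and>
       (\<forall>y\<in>X. inner (g t - \<xi> t) (x (Suc t)) + bregman psi gpsi (x (Suc t)) (x t) / (\<eta> / sqrt (real t))
              \<le> inner (g t - \<xi> t) y + bregman psi gpsi y (x t) / (\<eta> / sqrt (real t)))"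
    and T: "T \<ge> 1" and eta: "\<eta> > 0"
  shows
   "let c = nat \<lceil>real T / 2\<rceil>;
        \<alpha> = (\<lambda>j. 1 / (real (T - j) * real (T - j + 1)));
        w = (\<lambda>t. \<Sum>j = c..min t (T - 1). \<alpha> j *\<^sub>R (x t - x j));
        z = (\<lambda>t. \<Sum>j = c..min t (T - 1). \<alpha> j * bregman psi gpsi (x j) (x t));
        \<rho> = (\<lambda>t. \<Sum>j = c..min t (T - 1). \<alpha> j)
    in f (x T) - f xstar
       \<le> 2 / real T * (\<Sum>t = c..T. f (x t) - f xstar)
         + (\<Sum>t = c..T. inner (\<xi> t) (w t))
         + \<eta> / sqrt (2 * real T) * (\<Sum>t = c..T. \<rho> t * (dual_norm nrm (g t - \<xi> t))\<^sup>2)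
         + sqrt 2 / (\<eta> * sqrt (real T)) * (\<Sum>t = c..T. z t)"
  proof -
  define c where "c = nat \<lceil>real T / 2\<rceil>"
  define \<alpha> where "\<alpha> = (\<lambda>j. 1 / (real (T - j) * real (T - j + 1)))"
  define w where "w = (\<lambda>t. \<Sum>j = c..min t (T - 1). \<alpha> j *\<^sub>R (x t - x j))"
  define z where "z = (\<lambda>t. \<Sum>j = c..min t (T - 1). \<alpha> j * bregman psi gpsi (x j) (x t))"
  define \<rho> where "\<rho> = (\<lambda>t. \<Sum>j = c..min t (T - 1). \<alpha> j)"
  define q where "q t = f (x t) - f xstar" for t
  define DN where "DN t = dual_norm nrm (g t - \<xi> t)" for t
  define \<kappa> where "\<kappa> = sqrt 2 / (\<eta> * sqrt (real T))"
  define B where "B u v = bregman psi gpsi u v" for u v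
  have c1: "1 \<le> c" and cT: "c \<le> T" and c2: "real T \<le> 2 * real c" and c3: "2 * real c \<le> real T + 1"
    using ceil_facts[OF T] unfolding c_def by auto
  have XD: "X \<subseteq> D" using reg_facts[OF psi] by auto
  have xin: "x t \<in> X \<and> x t \<in> interior D" if "t \<ge> 1" for t
  proof (cases t)
    case 0 then show ?thesis using that by simp
  next
    case (Suc s)
    show ?thesis
    proof (cases "s = 0")
      case True then show ?thesis using Suc x1 by simp
    next
      case False
      then have s1: "s \<ge> 1" by simp
      have st: "x (Suc s) \<in> X" and mn: "\<forall>y\<in>X. inner (g s - \<xi> s) (x (Suc s)) + bregman psi gpsi (x (Suc s)) (x s) / (\<eta> / sqrt (real s))
              \<le> inner (g s - \<xi> s) y + bregman psi gpsi y (x s) / (\<eta> / sqrt (real s))"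
        using step s1 by auto
      have e: "\<eta> / sqrt (real s) > 0" using eta s1 by simp
      have "x (Suc s) \<in> interior D"
        by (rule min_interior[OF psi X(3) _ _ st e mn]) (use x1 in auto)
      then show ?thesis using st Suc by simp
    qed
  qed
  have qnn: "q t \<ge> 0" if "t \<ge> 1" for t using xin[OF that] xstar unfolding q_def by auto
  have Bnn: "B u (x t) \<ge> 0" if "t \<ge> 1" "u \<in> X" for u t
    unfolding B_def using bregman_nonneg(2)[OF psi _ _ nrm] xin[OF that(1)] that(2) XD by auto
  have Bzero: "B u u = 0" for u unfolding B_def bregman_def by simp
  have pt: "q t - q j \<le> inner (\<xi> t) (x t - x j) + \<eta> / sqrt (2 * real T) * (DN t)\<^sup>2
              + (sqrt (real t) / \<eta>) * (B (x j) (x t) - B (x j) (x (Suc t)))"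
    if j: "c \<le> j" "j \<le> t" "t \<le> T" for j t
  proof -
    have t1: "t \<ge> 1" "j \<ge> 1" using j c1 by auto
    have xj: "x j \<in> X" using xin[OF t1(2)] by simp
    have sg: "f (x j) \<ge> f (x t) + inner (g t) (x j - x t)"
      using subg t1(1) xj unfolding subgrad_def by auto
    define e where "e = \<eta> / sqrt (real t)"
    have e: "e > 0" unfolding e_def using eta t1 by simp
    have st: "x (Suc t) \<in> X" and mn: "\<forall>y\<in>X. inner (g t - \<xi> t) (x (Suc t)) + bregman psi gpsi (x (Suc t)) (x t) / e
              \<le> inner (g t - \<xi> t) y + bregman psi gpsi y (x t) / e"
      using step t1 unfolding e_def by auto
    have xs: "x (Suc t) \<in> interior D" using xin[of "Suc t"] by simp
    have os: "e * inner (g t - \<xi> t) (x t - x j) \<le> B (x j) (x t) - B (x j) (x (Suc t)) + e\<^sup>2 / 2 * (DN t)\<^sup>2"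
      unfolding B_def DN_def
      by (rule one_step[OF psi nrm X(3) _ st xs xj e mn]) (use xin[OF t1(1)] in auto)
    then have os2: "inner (g t - \<xi> t) (x t - x j) \<le> (1 / e) * (B (x j) (x t) - B (x j) (x (Suc t))) + e / 2 * (DN t)\<^sup>2"
      using e by (simp add: field_simps power2_eq_square)
    have ie: "1 / e = sqrt (real t) / \<eta>" unfolding e_def by simp
    have "e / 2 \<le> \<eta> / sqrt (2 * real T)"
    proof -
      have "real T \<le> 2 * real t" using c2 j by linarith
      then have "sqrt (2 * real T) \<le> sqrt (4 * real t)" by simp
      also have "sqrt (4 * real t) = 2 * sqrt (real t)" by (simp add: real_sqrt_mult)
      finally have "sqrt (2 * real T) \<le> 2 * sqrt (real t)" .
      moreover have "sqrt (2 * real T) > 0" using T by simp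
      ultimately show ?thesis unfolding e_def using eta t1
        by (simp add: field_simps)
    qed
    then have "e / 2 * (DN t)\<^sup>2 \<le> \<eta> / sqrt (2 * real T) * (DN t)\<^sup>2"
      by (rule mult_right_mono) simp
    moreover have "q t - q j \<le> inner (g t) (x t - x j)"
      using sg unfolding q_def by (simp add: inner_diff_right)
    moreover have "inner (g t) (x t - x j) = inner (g t - \<xi> t) (x t - x j) + inner (\<xi> t) (x t - x j)"
      by (simp add: inner_diff_left)
    ultimately show ?thesis using os2[unfolded ie] by linarith
  qed
  have pj: "(\<Sum>t = j..T. q t - q j) \<le> (\<Sum>t = j..T. inner (\<xi> t) (x t - x j))
       + \<eta> / sqrt (2 * real T) * (\<Sum>t = j..T. (DN t)\<^sup>2) + \<kappa> * (\<Sum>t = j..T. B (x j) (x t))"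
    if j: "c \<le> j" "j \<le> T - 1" for j
  proof -
    have j1: "j \<ge> 1" "j \<le> T" using j c1 by auto
    have "(\<Sum>t = j..T. q t - q j) \<le> (\<Sum>t = j..T. inner (\<xi> t) (x t - x j) + \<eta> / sqrt (2 * real T) * (DN t)\<^sup>2
              + (sqrt (real t) / \<eta>) * (B (x j) (x t) - B (x j) (x (Suc t))))"
      by (rule sum_mono, rule pt) (use j in auto)
    also have "\<dots> = (\<Sum>t = j..T. inner (\<xi> t) (x t - x j)) + \<eta> / sqrt (2 * real T) * (\<Sum>t = j..T. (DN t)\<^sup>2)
              + (\<Sum>t = j..T. (sqrt (real t) / \<eta>) * (B (x j) (x t) - B (x j) (x (Suc t))))"
      by (simp add: sum.distrib sum_distrib_left)
    also have "(\<Sum>t = j..T. (sqrt (real t) / \<eta>) * (B (x j) (x t) - B (x j) (x (Suc t))))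
        \<le> \<kappa> * (\<Sum>t = j..T. B (x j) (x t))"
    proof (rule tele_bound[where b = "\<lambda>t. B (x j) (x t)" and e = "\<lambda>t. sqrt (real t) / \<eta>"])
      show "j \<le> T" using j1 by simp
      show "B (x j) (x j) = 0" by (rule Bzero)
      show "\<And>t. j \<le> t \<Longrightarrow> 0 \<le> B (x j) (x t)" using Bnn xin j1 by auto
      show "\<And>t. j \<le> t \<Longrightarrow> 0 \<le> sqrt (real t) / \<eta>" using eta by simp
      fix t assume tt: "j < t" "t \<le> T"
      have "sqrt (real t) - sqrt (real (t - 1)) \<le> sqrt 2 / sqrt (real T)"
        by (rule sqrt_step) (use tt j1 c2 j T in auto)
      then have "(sqrt (real t) - sqrt (real (t - 1))) / \<eta> \<le> (sqrt 2 / sqrt (real T)) / \<eta>"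
        by (rule divide_right_mono[OF _ less_imp_le[OF eta]])
      then show "sqrt (real t) / \<eta> - sqrt (real (t - 1)) / \<eta> \<le> \<kappa>"
        unfolding \<kappa>_def by (simp add: diff_divide_distrib mult.commute)
    qed
    finally show ?thesis by linarith
  qed
  have anonneg: "\<alpha> j \<ge> 0" for j unfolding \<alpha>_def by simp
  have sj: "(\<Sum>j = c..T - 1. \<alpha> j * (\<Sum>t = j..T. q t - q j))
     \<le> (\<Sum>j = c..T - 1. \<alpha> j * ((\<Sum>t = j..T. inner (\<xi> t) (x t - x j))
       + \<eta> / sqrt (2 * real T) * (\<Sum>t = j..T. (DN t)\<^sup>2) + \<kappa> * (\<Sum>t = j..T. B (x j) (x t))))"
    by (rule sum_mono, rule mult_left_mono[OF pj anonneg]) auto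
  also have "\<dots> = (\<Sum>j = c..T - 1. \<Sum>t = j..T. \<alpha> j * inner (\<xi> t) (x t - x j))
       + \<eta> / sqrt (2 * real T) * (\<Sum>j = c..T - 1. \<Sum>t = j..T. \<alpha> j * (DN t)\<^sup>2)
       + \<kappa> * (\<Sum>j = c..T - 1. \<Sum>t = j..T. \<alpha> j * B (x j) (x t))"
    by (simp add: sum.distrib sum_distrib_left algebra_simps)
  also have "\<dots> = (\<Sum>t = c..T. inner (\<xi> t) (w t))
       + \<eta> / sqrt (2 * real T) * (\<Sum>t = c..T. \<rho> t * (DN t)\<^sup>2)
       + \<kappa> * (\<Sum>t = c..T. z t)"
    unfolding swap_tri w_def \<rho>_def z_def B_def
    by (simp add: inner_sum_right sum_distrib_right)
  finally have sj2: "(\<Sum>j = c..T - 1. \<alpha> j * (\<Sum>t = j..T. q t - q j)) \<le> (\<Sum>t = c..T. inner (\<xi> t) (w t))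
       + \<eta> / sqrt (2 * real T) * (\<Sum>t = c..T. \<rho> t * (DN t)\<^sup>2)
       + \<kappa> * (\<Sum>t = c..T. z t)" .
  have TTc: "T - (T - c) = c" using cT by simp
  have ident: "q T = (1 / real (T - c + 1)) * (\<Sum>t = c..T. q t)
     + (\<Sum>j = c..T - 1. \<alpha> j * (\<Sum>t = j..T. q t - q j))"
    using last_iter_identity[of "T - c" T q] c1 cT unfolding TTc \<alpha>_def by simp
  have first: "(1 / real (T - c + 1)) * (\<Sum>t = c..T. q t) \<le> 2 / real T * (\<Sum>t = c..T. q t)"
  proof (rule mult_right_mono)
    show "0 \<le> (\<Sum>t = c..T. q t)" using qnn c1 by (intro sum_nonneg) auto
    have "real (T - c + 1) = real T - real c + 1" using cT by (simp add: of_nat_diff)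
    then have "real T \<le> 2 * real (T - c + 1)" unfolding \<open>real (T - c + 1) = real T - real c + 1\<close> using c3 by (simp add: algebra_simps)
    moreover have "real T > 0" using T by simp
    ultimately show "1 / real (T - c + 1) \<le> 2 / real T" by (simp add: field_simps)
  qed
  have fin: "f (x T) - f xstar
       \<le> 2 / real T * (\<Sum>t = c..T. f (x t) - f xstar)
         + (\<Sum>t = c..T. inner (\<xi> t) (w t))
         + \<eta> / sqrt (2 * real T) * (\<Sum>t = c..T. \<rho> t * (dual_norm nrm (g t - \<xi> t))\<^sup>2)
         + sqrt 2 / (\<eta> * sqrt (real T)) * (\<Sum>t = c..T. z t)"
    using ident first sj2 unfolding q_def[symmetric] DN_def[symmetric] \<kappa>_def[symmetric] by linarith
  show ?thesis unfolding Let_def using fin unfolding c_def \<alpha>_def w_def z_def \<rho>_def .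
qed


end
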